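(* Let $G$ be a finitely generated amenable group, $S$ a finite symmetric generating set, $\Gamma=\mathrm{Cay}(G,S)$, and $p\in(1,\infty)$. Let $(\xi_n)$ be a sequence of finitely supported probability measures on $G$ tending to a left-invariant mean, i.e. $\|\lambda_\gamma\xi_n-\xi_n\|_{\ell^1(G)}\to0$ for every $\gamma\in G$. If there is $K>0$ such that for all $s\in S$ and all $n$ the operator $f\mapsto(\delta_s-\delta_e)*\xi_n*f$ has norm at most $K$ as an operator from $D^p(\Gamma)$ to $\ell^p(G)$, then $\overline{\ell^p H}^1(\Gamma)=0$.
   Context: The Cayley graph $\Gamma=\mathrm{Cay}(G,S)$ has vertex set $G$ and edges $(\gamma,\gamma')$ with $s^{-1}\gamma=\gamma'$ for some $s\in S$. Functions take values in $\mathbb{K}=\mathbb{R}$ or $\mathbb{C}$. The gradient is $\nabla g(\gamma,\gamma')=g(\gamma')-g(\gamma)$; $D^p(\Gamma)=\{f:G\to\mathbb{K}:\nabla f\in\ell^p(E)\}$ with norm $\|f\|^p_{D^p}=\|\nabla f\|^p_{\ell^p(E)}+|f(e)|^p$, and $\overline{\ell^p H}^1(\Gamma)=D^p(\Gamma)/\overline{\ell^p(G)+\mathbb{K}}^{D^p}$ ($\mathbb{K}$ = constant functions). $(\lambda_\gamma f)(x)=f(\gamma^{-1}x)$; $\delta_\gamma$ is the Dirac mass at $\gamma$; convolution is $(\xi*f)(\eta)=\sum_{\gamma\in G}\xi(\gamma)f(\gamma^{-1}\eta)$. *)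

theory Defs
  imports "HOL-Analysis.Analysis"
begin

text \<open>The group G is a type of class group_add (written additively, not necessarily
commutative): x + y is the product, 0 the identity e, -x the inverse.
Scalars 'k are a complete real normed field (i.e. R or C).\<close>

definition generated_subgroup :: "'g::group_add set \<Rightarrow> 'g set" where
  "generated_subgroup S = \<Inter>{H. 0 \<in> H \<and> (\<forall>x\<in>H. \<forall>y\<in>H. x + y \<in> H) \<and> (\<forall>x\<in>H. - x \<in> H) \<and> S \<subseteq> H}"

definition finite_symmetric_generating_set :: "'g::group_add set \<Rightarrow> bool" where
  "finite_symmetric_generating_set S \<longleftrightarrow>
     finite S \<and> (\<forall>s\<in>S. - s \<in> S) \<and> generated_subgroup S = UNIV"

definition amenable_group :: "'g::group_add itself \<Rightarrow> bool" where
  "amenable_group TYPE('g) \<longleftrightarrow>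
    (\<exists>m :: ('g \<Rightarrow> real) \<Rightarrow> real.
       (\<forall>f g c. bounded (range f) \<and> bounded (range g) \<longrightarrow> m (\<lambda>x. f x + c * g x) = m f + c * m g)
     \<and> (\<forall>f. bounded (range f) \<and> (\<forall>x. f x \<ge> 0) \<longrightarrow> m f \<ge> 0)
     \<and> m (\<lambda>_. 1) = 1
     \<and> (\<forall>f \<gamma>. bounded (range f) \<longrightarrow> m (\<lambda>x. f (- \<gamma> + x)) = m f))"

definition cayley_edges :: "'g::group_add set \<Rightarrow> ('g \<times> 'g) set" where
  "cayley_edges S = {(\<gamma>, \<gamma>'). \<exists>s\<in>S. - s + \<gamma> = \<gamma>'}"

definition lp_space :: "real \<Rightarrow> ('g \<Rightarrow> 'k::real_normed_vector) set" where
  "lp_space p = {f. (\<lambda>x. norm (f x) powr p) summable_on UNIV}"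

definition lp_norm :: "real \<Rightarrow> ('g \<Rightarrow> 'k::real_normed_vector) \<Rightarrow> real" where
  "lp_norm p f = (\<Sum>\<^sub>\<infinity>x. norm (f x) powr p) powr (1 / p)"

definition Dp_space :: "real \<Rightarrow> 'g::group_add set \<Rightarrow> ('g \<Rightarrow> 'k::real_normed_vector) set" where
  "Dp_space p S = {f. (\<lambda>(x, y). norm (f y - f x) powr p) summable_on cayley_edges S}"

definition Dp_norm :: "real \<Rightarrow> 'g::group_add set \<Rightarrow> ('g \<Rightarrow> 'k::real_normed_vector) \<Rightarrow> real" where
  "Dp_norm p S f =
     ((\<Sum>\<^sub>\<infinity>(x, y)\<in>cayley_edges S. norm (f y - f x) powr p) + norm (f 0) powr p) powr (1 / p)"

definition lp_plus_const_closure :: "real \<Rightarrow> 'g::group_add set \<Rightarrow> ('g \<Rightarrow> 'k::real_normed_vector) set" where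
  "lp_plus_const_closure p S = {f \<in> Dp_space p S. \<forall>\<epsilon>>0. \<exists>g \<in> lp_space p. \<exists>c.
       Dp_norm p S (\<lambda>x. f x - (g x + c)) < \<epsilon>}"

definition reduced_lp_cohomology_vanishes :: "real \<Rightarrow> 'g::group_add set \<Rightarrow> 'k::real_normed_vector itself \<Rightarrow> bool" where
  "reduced_lp_cohomology_vanishes p S TYPE('k) \<longleftrightarrow>
     (Dp_space p S :: ('g \<Rightarrow> 'k) set) = lp_plus_const_closure p S"

definition conv :: "('g::group_add \<Rightarrow> real) \<Rightarrow> ('g \<Rightarrow> 'k::real_vector) \<Rightarrow> 'g \<Rightarrow> 'k" where
  "conv \<xi> f \<eta> = (\<Sum>\<gamma>\<in>{\<gamma>. \<xi> \<gamma> \<noteq> 0}. \<xi> \<gamma> *\<^sub>R f (- \<gamma> + \<eta>))"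

definition dirac :: "'g \<Rightarrow> 'g \<Rightarrow> real" where
  "dirac \<gamma> = (\<lambda>x. if x = \<gamma> then 1 else 0)"

definition finitely_supported_prob :: "('g \<Rightarrow> real) \<Rightarrow> bool" where
  "finitely_supported_prob \<xi> \<longleftrightarrow>
     (\<forall>x. \<xi> x \<ge> 0) \<and> finite {x. \<xi> x \<noteq> 0} \<and> (\<Sum>x\<in>{x. \<xi> x \<noteq> 0}. \<xi> x) = 1"

end

theory Submission
  imports Defs
begin


lemma powr_sum_le:
  fixes a :: "'i \<Rightarrow> real"
  assumes "finite K" "\<And>k. k \<in> K \<Longrightarrow> a k \<ge> 0" "p \<ge> 0"
  shows "(\<Sum>k\<in>K. a k) powr p \<le> real (card K) powr p * (\<Sum>k\<in>K. a k powr p)"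
proof (cases "K = {}")
  case True then show ?thesis by simp
next
  case False
  define M where "M = Max (a ` K)"
  have MK: "M \<in> a ` K" unfolding M_def using assms(1) False by (intro Max_in) auto
  then obtain k0 where k0: "k0 \<in> K" "M = a k0" by auto
  have "(\<Sum>k\<in>K. a k) \<le> (\<Sum>k\<in>K. M)"
    by (intro sum_mono) (use assms(1) in \<open>auto simp: M_def\<close>)
  also have "\<dots> = real (card K) * M" by simp
  finally have "(\<Sum>k\<in>K. a k) powr p \<le> (real (card K) * M) powr p"
    by (intro powr_mono2 assms(3) sum_nonneg assms(2)) auto
  also have "\<dots> = real (card K) powr p * M powr p"
    using k0 assms by (simp add: powr_mult)
  also have "M powr p \<le> (\<Sum>k\<in>K. a k powr p)"
    using k0 assms member_le_sum[of k0 K "\<lambda>k. a k powr p"] by auto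
  hence "real (card K) powr p * M powr p \<le> real (card K) powr p * (\<Sum>k\<in>K. a k powr p)"
    by (intro mult_left_mono) auto
  finally show ?thesis .
qed

lemma norm_add_powr_le:
  fixes a b :: "'a::real_normed_vector"
  assumes "p \<ge> 0"
  shows "norm (a + b) powr p \<le> 2 powr p * (norm a powr p + norm b powr p)"
proof -
  have "norm (a + b) powr p \<le> (norm a + norm b) powr p"
    by (intro powr_mono2 assms norm_triangle_ineq) auto
  also have "\<dots> \<le> real (card {0::nat,1}) powr p * (\<Sum>k\<in>{0::nat,1}. (if k = 0 then norm a else norm b) powr p)"
    using powr_sum_le[of "{0::nat,1}" "\<lambda>k. if k = 0 then norm a else norm b" p] assms by simp
  finally show ?thesis by simp
qed

lemma has_sum_sum_fun:
  fixes f :: "'k \<Rightarrow> 'i \<Rightarrow> 'a::topological_comm_monoid_add"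
  assumes "finite K" "\<And>k. k \<in> K \<Longrightarrow> (f k has_sum s k) A"
  shows "((\<lambda>x. \<Sum>k\<in>K. f k x) has_sum (\<Sum>k\<in>K. s k)) A"
  using assms
proof (induction K rule: finite_induct)
  case empty then show ?case by simp
next
  case (insert k K) then show ?case by (simp add: has_sum_add)
qed

lemma summable_on_sum_fun:
  fixes f :: "'k \<Rightarrow> 'i \<Rightarrow> 'a::{topological_comm_monoid_add,t2_space}"
  assumes "finite K" "\<And>k. k \<in> K \<Longrightarrow> f k summable_on A"
  shows "(\<lambda>x. \<Sum>k\<in>K. f k x) summable_on A"
    and "(\<Sum>\<^sub>\<infinity>x\<in>A. \<Sum>k\<in>K. f k x) = (\<Sum>k\<in>K. \<Sum>\<^sub>\<infinity>x\<in>A. f k x)"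
proof -
  have "((\<lambda>x. \<Sum>k\<in>K. f k x) has_sum (\<Sum>k\<in>K. \<Sum>\<^sub>\<infinity>x\<in>A. f k x)) A"
    using assms by (intro has_sum_sum_fun) auto
  then show "(\<lambda>x. \<Sum>k\<in>K. f k x) summable_on A"
    and "(\<Sum>\<^sub>\<infinity>x\<in>A. \<Sum>k\<in>K. f k x) = (\<Sum>k\<in>K. \<Sum>\<^sub>\<infinity>x\<in>A. f k x)"
    by (auto simp: summable_on_def infsumI)
qed

lemma infsum_restrict_le:
  fixes g :: "'i \<Rightarrow> real"
  assumes "g summable_on I" "\<And>i. i \<in> I \<Longrightarrow> g i \<ge> 0" "J \<subseteq> I"
  shows "g summable_on J" "infsum g J \<le> infsum g I"
proof -
  show "g summable_on J" using assms summable_on_subset_banach by blast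
  then show "infsum g J \<le> infsum g I"
    using assms by (intro infsum_mono_neutral) auto
qed

lemma tail_small:
  fixes g :: "'i \<Rightarrow> real"
  assumes "g summable_on I" "\<delta> > 0"
  shows "\<exists>G. finite G \<and> G \<subseteq> I \<and> infsum g (I - G) < \<delta>"
proof -
  obtain G where G: "finite G" "G \<subseteq> I" "dist (sum g G) (infsum g I) \<le> \<delta>/2"
    using infsum_finite_approximation[OF assms(1), of "\<delta>/2"] assms(2) by auto
  have s2: "g summable_on (I - G)" using assms(1) summable_on_subset_banach by blast
  have "infsum g I = infsum g (G \<union> (I - G))" using G(2) by (simp add: Un_absorb1)
  also have "\<dots> = infsum g G + infsum g (I - G)"
    using s2 G(1) by (intro infsum_Un_disjoint) auto
  finally have "infsum g (I - G) = infsum g I - sum g G" using G(1) by simp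
  with G(3) assms(2) have "infsum g (I - G) < \<delta>" by (simp add: dist_real_def abs_if split: if_splits)
  with G show ?thesis by blast
qed



lemma gliding_hump:
  fixes V :: "nat \<Rightarrow> 'i \<Rightarrow> 'a::real_normed_vector"
  assumes p: "1 < p"
    and sm: "\<And>n. (\<lambda>i. norm (V n i) powr p) summable_on I"
    and bd: "\<And>n. (\<Sum>\<^sub>\<infinity>i\<in>I. norm (V n i) powr p) \<le> B"
    and pw: "\<And>i. i \<in> I \<Longrightarrow> (\<lambda>n. V n i) \<longlonglongrightarrow> 0"
    and eps: "\<epsilon> > 0"
  shows "\<exists>N m. N > 0 \<and> (\<Sum>\<^sub>\<infinity>i\<in>I. norm ((1 / real N) *\<^sub>R (\<Sum>k<N. V (m k) i)) powr p) < \<epsilon>"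
proof -
  have B0: "0 \<le> B" using bd[of 0] infsum_nonneg[of I "\<lambda>i. norm (V 0 i) powr p"] by auto
  have "(\<lambda>N. real N powr (1 - p)) \<longlonglongrightarrow> 0"
    using p by (intro tendsto_neg_powr filterlim_real_sequentially) auto
  hence "(\<lambda>N. 2 powr p * B * real N powr (1 - p)) \<longlonglongrightarrow> 2 powr p * B * 0"
    by (intro tendsto_mult tendsto_const)
  hence "\<forall>\<^sub>F N in sequentially. 2 powr p * B * real N powr (1 - p) < \<epsilon>/2"
    using eps by (intro order_tendstoD(2)) auto
  then obtain N0 where N0: "\<And>N. N \<ge> N0 \<Longrightarrow> 2 powr p * B * real N powr (1 - p) < \<epsilon>/2"
    unfolding eventually_sequentially by blast
  define N where "N = Suc N0"
  have Npos: "N > 0" and NB: "2 powr p * B * real N powr (1 - p) < \<epsilon>/2"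
    using N0[of N] by (auto simp: N_def)
  define \<delta> where "\<delta> = \<epsilon> / (8 * 2 powr p * real N)"
  have dpos: "\<delta> > 0" using eps Npos by (simp add: \<delta>_def)
  define g where "g n i = norm (V n i) powr p" for n i
  have g0: "g n i \<ge> 0" for n i by (simp add: g_def)
  have exn: "\<exists>n. (\<Sum>i\<in>F. g n i) < \<delta>" if "finite F" "F \<subseteq> I" for F
  proof -
    have "(\<lambda>n. \<Sum>i\<in>F. g n i) \<longlonglongrightarrow> (\<Sum>i\<in>F. 0)"
      unfolding g_def
    proof (intro tendsto_sum)
      fix i assume "i \<in> F"
      hence "(\<lambda>n. norm (V n i)) \<longlonglongrightarrow> 0" using pw that tendsto_norm_zero by blast
      then show "(\<lambda>n. norm (V n i) powr p) \<longlonglongrightarrow> 0"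
        using p by (intro tendsto_zero_powrI[where b = p]) auto
    qed
    hence "\<forall>\<^sub>F n in sequentially. (\<Sum>i\<in>F. g n i) < \<delta>"
      using dpos by (intro order_tendstoD(2)) auto
    then show ?thesis unfolding eventually_sequentially by blast
  qed
  have exg: "\<exists>G. finite G \<and> G \<subseteq> I \<and> infsum (g n) (I - G) < \<delta>" for n
    using tail_small[OF sm[of n] dpos] by (simp add: g_def[abs_def])
  define nsel where "nsel F = (SOME n. (\<Sum>i\<in>F. g n i) < \<delta>)" for F
  define gsel where "gsel n = (SOME G. finite G \<and> G \<subseteq> I \<and> infsum (g n) (I - G) < \<delta>)" for n
  define Fs where "Fs = rec_nat {} (\<lambda>k F. F \<union> gsel (nsel F))"
  have Fs0: "Fs 0 = {}" and FsS: "Fs (Suc k) = Fs k \<union> gsel (nsel (Fs k))" for k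
    by (simp_all add: Fs_def)
  have gs: "finite (gsel n) \<and> gsel n \<subseteq> I \<and> infsum (g n) (I - gsel n) < \<delta>" for n
    unfolding gsel_def using someI_ex[OF exg[of n]] .
  have Ffin: "finite (Fs k) \<and> Fs k \<subseteq> I" for k
    by (induction k) (use gs in \<open>auto simp: Fs0 FsS\<close>)
  have ns: "(\<Sum>i\<in>Fs k. g (nsel (Fs k)) i) < \<delta>" for k
    unfolding nsel_def using someI_ex[OF exn[of "Fs k"]] Ffin by blast
  define m where "m k = nsel (Fs k)" for k
  have mono: "Fs k \<subseteq> Fs j" if "k \<le> j" for k j
    using lift_Suc_mono_le[of Fs, OF _ that] FsS by blast
  define D where "D k = Fs (Suc k) - Fs k" for k
  have Ddisj: "D k \<inter> D j = {}" if "k \<noteq> j" for k j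
  proof -
    have *: "D a \<inter> D b = {}" if "a < b" for a b
      using mono[of "Suc a" b] that by (auto simp: D_def)
    show ?thesis using that *[of k j] *[of j k] by (cases "k < j") auto
  qed
  define w where "w k i = (if i \<in> D k then V (m k) i else 0)" for k i
  define r where "r k i = (if i \<in> D k then 0 else V (m k) i)" for k i
  have Vwr: "V (m k) i = w k i + r k i" for k i by (simp add: w_def r_def)
  have w_le: "norm (w k i) powr p \<le> g (m k) i" for k i by (simp add: w_def g_def)
  have smw: "(\<lambda>i. norm (w k i) powr p) summable_on I" for k
    by (rule summable_on_comparison_test[OF sm[of "m k"]]) (use w_le in \<open>auto simp: g_def\<close>)
  have infw: "(\<Sum>\<^sub>\<infinity>i\<in>I. norm (w k i) powr p) \<le> B" for k
  proof -
    have "(\<Sum>\<^sub>\<infinity>i\<in>I. norm (w k i) powr p) \<le> infsum (g (m k)) I"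
      using smw sm[of "m k"] w_le by (intro infsum_mono) (auto simp: g_def[abs_def])
    also have "\<dots> \<le> B" using bd[of "m k"] by (simp add: g_def[abs_def])
    finally show ?thesis .
  qed
  have smr: "(\<lambda>i. norm (r k i) powr p) summable_on I" and infr: "(\<Sum>\<^sub>\<infinity>i\<in>I. norm (r k i) powr p) \<le> 2 * \<delta>" for k
  proof -
    define h1 where "h1 i = (if i \<in> Fs k then g (m k) i else 0)" for i
    define h2 where "h2 i = (if i \<in> I - Fs (Suc k) then g (m k) i else 0)" for i
    have smg: "g (m k) summable_on I" using sm[of "m k"] by (simp add: g_def[abs_def])
    have s1: "h1 summable_on I"
      by (rule finite_nonzero_values_imp_summable_on, rule finite_subset[of _ "Fs k"])
         (use Ffin in \<open>auto simp: h1_def\<close>)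
    have s2: "h2 summable_on I"
      using smg by (rule summable_on_comparison_test) (auto simp: h2_def g0)
    have le: "norm (r k i) powr p \<le> h1 i + h2 i" if "i \<in> I" for i
      using that mono[of k "Suc k"] g0 by (auto simp: r_def h1_def h2_def D_def g_def)
    show smr: "(\<lambda>i. norm (r k i) powr p) summable_on I"
      using summable_on_add[OF s1 s2] le by (rule summable_on_comparison_test) auto
    have "(\<Sum>\<^sub>\<infinity>i\<in>I. norm (r k i) powr p) \<le> (\<Sum>\<^sub>\<infinity>i\<in>I. h1 i + h2 i)"
      using smr summable_on_add[OF s1 s2] le by (intro infsum_mono) auto
    also have "\<dots> = infsum h1 I + infsum h2 I" using s1 s2 by (rule infsum_add)
    also have "infsum h1 I = (\<Sum>i\<in>Fs k. g (m k) i)"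
    proof -
      have "infsum h1 I = infsum h1 (Fs k)"
        using Ffin by (intro infsum_cong_neutral) (auto simp: h1_def)
      also have "\<dots> = (\<Sum>i\<in>Fs k. g (m k) i)" using Ffin by (simp add: h1_def)
      finally show ?thesis .
    qed
    also have "infsum h2 I = infsum (g (m k)) (I - Fs (Suc k))"
      by (intro infsum_cong_neutral) (auto simp: h2_def)
    also have "\<dots> \<le> infsum (g (m k)) (I - gsel (m k))"
    proof (rule infsum_restrict_le(2))
      show "g (m k) summable_on I - gsel (m k)" using smg summable_on_subset_banach by blast
    qed (auto simp: g0 FsS m_def)
    also have "\<dots> < \<delta>" using gs by blast
    finally show "(\<Sum>\<^sub>\<infinity>i\<in>I. norm (r k i) powr p) \<le> 2 * \<delta>" using ns[of k] by (simp add: m_def)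
  qed
  define c where "c = (1 / real N) powr p * 2 powr p"
  have c0: "c \<ge> 0" by (simp add: c_def)
  define R where "R i = c * ((\<Sum>k<N. norm (w k i) powr p) + real N powr p * (\<Sum>k<N. norm (r k i) powr p))" for i
  define A where "A i = norm ((1 / real N) *\<^sub>R (\<Sum>k<N. V (m k) i)) powr p" for i
  have AR: "A i \<le> R i" for i
  proof -
    have wsum: "norm (\<Sum>k<N. w k i) powr p = (\<Sum>k<N. norm (w k i) powr p)"
    proof (cases "\<exists>k0<N. i \<in> D k0")
      case True
      then obtain k0 where k0: "k0 < N" "i \<in> D k0" by blast
      have z: "w k i = 0" if "k \<noteq> k0" for k
        using Ddisj[OF that] k0 by (auto simp: w_def)
      have "(\<Sum>k<N. w k i) = w k0 i"
        using k0 z by (subst sum.remove[of _ k0]) (auto intro!: sum.neutral)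
      moreover have "(\<Sum>k<N. norm (w k i) powr p) = norm (w k0 i) powr p"
        using k0 z by (subst sum.remove[of _ k0]) (auto intro!: sum.neutral)
      ultimately show ?thesis by simp
    next
      case False
      hence "w k i = 0" if "k < N" for k using that by (auto simp: w_def)
      then show ?thesis by simp
    qed
    have rsum: "norm (\<Sum>k<N. r k i) powr p \<le> real N powr p * (\<Sum>k<N. norm (r k i) powr p)"
    proof -
      have "norm (\<Sum>k<N. r k i) powr p \<le> (\<Sum>k<N. norm (r k i)) powr p"
        using p by (intro powr_mono2 norm_sum) auto
      also have "\<dots> \<le> real (card {..<N}) powr p * (\<Sum>k<N. norm (r k i) powr p)"
        using p by (intro powr_sum_le) auto
      finally show ?thesis by simp
    qed
    have "A i = (1 / real N) powr p * norm ((\<Sum>k<N. w k i) + (\<Sum>k<N. r k i)) powr p"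
      unfolding A_def using Npos by (simp add: Vwr sum.distrib powr_divide)
    also have "\<dots> \<le> (1 / real N) powr p * (2 powr p * (norm (\<Sum>k<N. w k i) powr p + norm (\<Sum>k<N. r k i) powr p))"
      using p by (intro mult_left_mono norm_add_powr_le) auto
    also have "\<dots> \<le> R i"
      unfolding R_def c_def wsum using rsum by (simp only: mult.assoc, intro mult_left_mono add_left_mono) auto
    finally show ?thesis .
  qed
  have smR: "R summable_on I"
    unfolding R_def
    by (intro summable_on_cmult_right summable_on_add summable_on_sum_fun(1) smw smr) auto
  have A0: "A i \<ge> 0" for i by (simp add: A_def)
  have smA: "A summable_on I" using smR AR A0 by (rule summable_on_comparison_test)
  have "infsum A I \<le> infsum R I" using smA smR AR by (intro infsum_mono) auto
  also have "infsum R I = c * ((\<Sum>k<N. \<Sum>\<^sub>\<infinity>i\<in>I. norm (w k i) powr p) + real N powr p * (\<Sum>k<N. \<Sum>\<^sub>\<infinity>i\<in>I. norm (r k i) powr p))"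
  proof -
    have sw: "(\<lambda>i. \<Sum>k<N. norm (w k i) powr p) summable_on I"
      by (rule summable_on_sum_fun(1)) (auto intro: smw)
    have sr: "(\<lambda>i. \<Sum>k<N. norm (r k i) powr p) summable_on I"
      by (rule summable_on_sum_fun(1)) (auto intro: smr)
    have ew: "(\<Sum>\<^sub>\<infinity>i\<in>I. \<Sum>k<N. norm (w k i) powr p) = (\<Sum>k<N. \<Sum>\<^sub>\<infinity>i\<in>I. norm (w k i) powr p)"
      by (rule summable_on_sum_fun(2)) (auto intro: smw)
    have er: "(\<Sum>\<^sub>\<infinity>i\<in>I. \<Sum>k<N. norm (r k i) powr p) = (\<Sum>k<N. \<Sum>\<^sub>\<infinity>i\<in>I. norm (r k i) powr p)"
      by (rule summable_on_sum_fun(2)) (auto intro: smr)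
    have "infsum R I = c * (\<Sum>\<^sub>\<infinity>i\<in>I. (\<Sum>k<N. norm (w k i) powr p) + real N powr p * (\<Sum>k<N. norm (r k i) powr p))"
      unfolding R_def by (rule infsum_cmult_right')
    also have "(\<Sum>\<^sub>\<infinity>i\<in>I. (\<Sum>k<N. norm (w k i) powr p) + real N powr p * (\<Sum>k<N. norm (r k i) powr p))
       = (\<Sum>\<^sub>\<infinity>i\<in>I. \<Sum>k<N. norm (w k i) powr p) + (\<Sum>\<^sub>\<infinity>i\<in>I. real N powr p * (\<Sum>k<N. norm (r k i) powr p))"
      using sw sr by (intro infsum_add summable_on_cmult_right)
    also have "(\<Sum>\<^sub>\<infinity>i\<in>I. real N powr p * (\<Sum>k<N. norm (r k i) powr p)) = real N powr p * (\<Sum>\<^sub>\<infinity>i\<in>I. \<Sum>k<N. norm (r k i) powr p)"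
      by (rule infsum_cmult_right')
    finally show ?thesis by (simp only: ew er)
  qed
  also have "\<dots> \<le> c * (real N * B + real N powr p * (real N * (2 * \<delta>)))"
  proof -
    have "(\<Sum>k<N. \<Sum>\<^sub>\<infinity>i\<in>I. norm (w k i) powr p) \<le> (\<Sum>k<N. B)" by (intro sum_mono infw)
    moreover have "(\<Sum>k<N. \<Sum>\<^sub>\<infinity>i\<in>I. norm (r k i) powr p) \<le> (\<Sum>k<N. 2 * \<delta>)" by (intro sum_mono infr)
    ultimately have "(\<Sum>k<N. \<Sum>\<^sub>\<infinity>i\<in>I. norm (w k i) powr p) \<le> real N * B"
       "(\<Sum>k<N. \<Sum>\<^sub>\<infinity>i\<in>I. norm (r k i) powr p) \<le> real N * (2 * \<delta>)" by auto
    then show ?thesis using c0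
      by (intro mult_left_mono[OF _ c0] add_mono mult_left_mono) auto
  qed
  also have "\<dots> = 2 powr p * B * real N powr (1 - p) + 2 powr p * (2 * \<delta>) * real N"
  proof -
    have e1: "(1 / real N) powr p * real N = real N powr (1 - p)"
      using Npos by (simp add: powr_diff powr_divide)
    have e2: "(1 / real N) powr p * real N powr p = 1"
      using Npos by (simp add: powr_divide)
    have "c * (real N * B + real N powr p * (real N * (2 * \<delta>))) =
      2 powr p * B * ((1 / real N) powr p * real N) + 2 powr p * (2 * \<delta>) * real N * ((1 / real N) powr p * real N powr p)"
      unfolding c_def by (simp add: algebra_simps)
    then show ?thesis by (simp only: e1 e2)
  qed
  also have "\<dots> < \<epsilon>"
  proof -
    have "2 powr p * (2 * \<delta>) * real N = \<epsilon> / 4"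
      using Npos by (simp add: \<delta>_def)
    then show ?thesis using NB eps by linarith
  qed
  finally show ?thesis using Npos unfolding A_def by blast
qed



lemma lp_add:
  fixes u v :: "'g \<Rightarrow> 'k::real_normed_vector"
  assumes "u \<in> lp_space p" "v \<in> lp_space p" "p \<ge> 0"
  shows "(\<lambda>x. u x + v x) \<in> lp_space p"
proof -
  have "(\<lambda>x. 2 powr p * (norm (u x) powr p + norm (v x) powr p)) summable_on UNIV"
    using assms by (intro summable_on_cmult_right summable_on_add) (auto simp: lp_space_def)
  then have "(\<lambda>x. norm (u x + v x) powr p) summable_on UNIV"
    by (rule summable_on_comparison_test) (use assms norm_add_powr_le in auto)
  then show ?thesis by (simp add: lp_space_def)
qed

lemma lp_scale:
  fixes u :: "'g \<Rightarrow> 'k::real_normed_vector"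
  assumes "u \<in> lp_space p" "p > 0"
  shows "(\<lambda>x. c *\<^sub>R u x) \<in> lp_space p"
proof -
  have "(\<lambda>x. \<bar>c\<bar> powr p * norm (u x) powr p) summable_on UNIV"
    using assms by (intro summable_on_cmult_right) (auto simp: lp_space_def)
  moreover have "norm (c *\<^sub>R u x) powr p = \<bar>c\<bar> powr p * norm (u x) powr p" for x
    by (simp add: powr_mult)
  ultimately show ?thesis by (simp add: lp_space_def)
qed

lemma lp_uminus:
  fixes u :: "'g \<Rightarrow> 'k::real_normed_vector"
  assumes "u \<in> lp_space p"
  shows "(\<lambda>x. - u x) \<in> lp_space p"
  using assms by (simp add: lp_space_def)

lemma lp_zero: "(\<lambda>x. 0 :: 'k::real_normed_vector) \<in> lp_space p"
  by (simp add: lp_space_def)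

lemma lp_sum:
  fixes u :: "'a \<Rightarrow> 'g \<Rightarrow> 'k::real_normed_vector"
  assumes "finite A" "\<And>a. a \<in> A \<Longrightarrow> u a \<in> lp_space p" "p \<ge> 0"
  shows "(\<lambda>x. \<Sum>a\<in>A. u a x) \<in> lp_space p"
  using assms
proof (induction A rule: finite_induct)
  case empty then show ?case by (simp add: lp_zero)
next
  case (insert a A)
  then show ?case by (simp add: lp_add)
qed

lemma lp_translate:
  fixes u :: "'g::group_add \<Rightarrow> 'k::real_normed_vector"
  assumes "u \<in> lp_space p"
  shows "(\<lambda>x. u (a + x)) \<in> lp_space p"
proof -
  have bij: "bij_betw (\<lambda>x. a + x) UNIV UNIV"
    by (rule bij_betwI[where g = "\<lambda>x. - a + x"]) (auto simp: add.assoc[symmetric])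
  show ?thesis using assms summable_on_reindex_bij_betw[OF bij, of "\<lambda>y. norm (u y) powr p"]
    by (simp add: lp_space_def)
qed

lemma Dp_edge_lp:
  fixes f :: "'g::group_add \<Rightarrow> 'k::real_normed_vector"
  assumes "f \<in> Dp_space p S" "s \<in> S"
  shows "(\<lambda>x. f (- s + x) - f x) \<in> lp_space p"
proof -
  have sub: "range (\<lambda>x. (x, - s + x)) \<subseteq> cayley_edges S"
    using assms(2) by (auto simp: cayley_edges_def)
  have "(\<lambda>(x, y). norm (f y - f x) powr p) summable_on range (\<lambda>x. (x, - s + x))"
    using assms(1) sub unfolding Dp_space_def by (auto intro: summable_on_subset_banach)
  then have "((\<lambda>(x, y). norm (f y - f x) powr p) \<circ> (\<lambda>x. (x, - s + x))) summable_on UNIV"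
    by (subst (asm) summable_on_reindex) (auto simp: inj_on_def)
  then show ?thesis by (simp add: lp_space_def o_def)
qed

lemma Dp_translate_lp:
  fixes f :: "'g::group_add \<Rightarrow> 'k::real_normed_vector"
  assumes "f \<in> Dp_space p S" "finite_symmetric_generating_set S" "p > 0"
  shows "(\<lambda>x. f (- \<gamma> + x) - f x) \<in> lp_space p"
proof -
  define H where "H = {\<gamma>. (\<lambda>x. f (- \<gamma> + x) - f x) \<in> lp_space p}"
  have "0 \<in> H" by (simp add: H_def lp_zero)
  moreover have "a + b \<in> H" if "a \<in> H" "b \<in> H" for a b
  proof -
    have "(\<lambda>x. (f (- b + (- a + x)) - f (- a + x)) + (f (- a + x) - f x)) \<in> lp_space p"
      using that assms(3) lp_translate[of "\<lambda>x. f (- b + x) - f x" p "- a"]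
      by (intro lp_add) (auto simp: H_def)
    moreover have "(\<lambda>x. f (- (a + b) + x) - f x) = (\<lambda>x. (f (- b + (- a + x)) - f (- a + x)) + (f (- a + x) - f x))"
    proof
      fix x
      have "- (a + b) + x = - b + (- a + x)" by (metis add.assoc minus_add)
      then show "f (- (a + b) + x) - f x = (f (- b + (- a + x)) - f (- a + x)) + (f (- a + x) - f x)"
        by simp
    qed
    ultimately show ?thesis by (simp only: H_def mem_Collect_eq)
  qed
  moreover have "- a \<in> H" if "a \<in> H" for a
  proof -
    have "(\<lambda>x. - (f (- a + (a + x)) - f (a + x))) \<in> lp_space p"
      using that lp_translate[of "\<lambda>x. f (- a + x) - f x" p a]
      by (intro lp_uminus) (auto simp: H_def)
    then show ?thesis by (simp add: H_def add.assoc[symmetric])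
  qed
  moreover have "S \<subseteq> H" using Dp_edge_lp[OF assms(1)] by (auto simp: H_def)
  ultimately have "generated_subgroup S \<subseteq> H"
    unfolding generated_subgroup_def by blast
  then show ?thesis using assms(2) by (auto simp: finite_symmetric_generating_set_def H_def)
qed

lemma conv_superset:
  assumes "finite A" "{\<gamma>. \<xi> \<gamma> \<noteq> 0} \<subseteq> A"
  shows "conv \<xi> f \<eta> = (\<Sum>\<gamma>\<in>A. \<xi> \<gamma> *\<^sub>R f (- \<gamma> + \<eta>))"
  unfolding conv_def using assms by (intro sum.mono_neutral_left) auto

lemma conv_diff: "conv \<xi> (\<lambda>x. f x - g x) \<eta> = conv \<xi> f \<eta> - conv \<xi> g \<eta>"
  unfolding conv_def by (simp add: sum_subtractf scaleR_diff_right)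

lemma conv_dirac_diff:
  "conv (\<lambda>x. dirac s x - dirac 0 x) \<xi> = (\<lambda>\<gamma>. \<xi> (- s + \<gamma>) - \<xi> \<gamma>)"
proof
  fix \<gamma>
  have "conv (\<lambda>x. dirac s x - dirac 0 x) \<xi> \<gamma> = (\<Sum>\<beta>\<in>{s, 0}. (dirac s \<beta> - dirac 0 \<beta>) *\<^sub>R \<xi> (- \<beta> + \<gamma>))"
    by (rule conv_superset) (auto simp: dirac_def)
  then show "conv (\<lambda>x. dirac s x - dirac 0 x) \<xi> \<gamma> = \<xi> (- s + \<gamma>) - \<xi> \<gamma>"
    by (cases "s = 0") (auto simp: dirac_def)
qed

lemma conv_grad:
  fixes f :: "'g::group_add \<Rightarrow> 'k::real_vector"
  assumes fin: "finite {\<gamma>. \<xi> \<gamma> \<noteq> 0}"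
  shows "conv (\<lambda>\<gamma>. \<xi> (- s + \<gamma>) - \<xi> \<gamma>) f x = conv \<xi> f (- s + x) - conv \<xi> f x"
proof -
  define A0 where "A0 = {\<gamma>. \<xi> \<gamma> \<noteq> 0}"
  define A where "A = A0 \<union> (\<lambda>a. s + a) ` A0"
  define B where "B = (\<lambda>\<gamma>. - s + \<gamma>) ` A"
  have finA: "finite A" using fin by (simp add: A_def A0_def)
  have finB: "finite B" using finA by (simp add: B_def)
  have suppc: "{\<gamma>. \<xi> (- s + \<gamma>) - \<xi> \<gamma> \<noteq> 0} \<subseteq> A"
  proof
    fix \<gamma> assume "\<gamma> \<in> {\<gamma>. \<xi> (- s + \<gamma>) - \<xi> \<gamma> \<noteq> 0}"
    hence "\<xi> (- s + \<gamma>) \<noteq> 0 \<or> \<xi> \<gamma> \<noteq> 0" by auto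
    moreover have "\<gamma> = s + (- s + \<gamma>)" by (simp add: add.assoc[symmetric])
    ultimately show "\<gamma> \<in> A" unfolding A_def A0_def by blast
  qed
  have A0B: "A0 \<subseteq> B"
  proof
    fix a assume "a \<in> A0"
    hence "s + a \<in> A" by (auto simp: A_def)
    moreover have "a = - s + (s + a)" by (simp add: add.assoc[symmetric])
    ultimately show "a \<in> B" unfolding B_def by blast
  qed
  have AB: "A = (\<lambda>\<beta>. s + \<beta>) ` B"
    unfolding B_def image_image by (simp add: add.assoc[symmetric])
  have "conv (\<lambda>\<gamma>. \<xi> (- s + \<gamma>) - \<xi> \<gamma>) f x = (\<Sum>\<gamma>\<in>A. (\<xi> (- s + \<gamma>) - \<xi> \<gamma>) *\<^sub>R f (- \<gamma> + x))"
    using finA suppc by (rule conv_superset)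
  also have "\<dots> = (\<Sum>\<gamma>\<in>A. \<xi> (- s + \<gamma>) *\<^sub>R f (- \<gamma> + x)) - (\<Sum>\<gamma>\<in>A. \<xi> \<gamma> *\<^sub>R f (- \<gamma> + x))"
    by (simp add: scaleR_diff_left sum_subtractf)
  also have "(\<Sum>\<gamma>\<in>A. \<xi> \<gamma> *\<^sub>R f (- \<gamma> + x)) = conv \<xi> f x"
    using finA by (intro conv_superset[symmetric]) (auto simp: A_def A0_def)
  also have "(\<Sum>\<gamma>\<in>A. \<xi> (- s + \<gamma>) *\<^sub>R f (- \<gamma> + x)) = (\<Sum>\<beta>\<in>B. \<xi> \<beta> *\<^sub>R f (- \<beta> + (- s + x)))"
    unfolding AB by (subst sum.reindex) (auto simp: inj_on_def minus_add add.assoc[symmetric])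
  also have "\<dots> = conv \<xi> f (- s + x)"
    using finB A0B by (intro conv_superset[symmetric]) (auto simp: A0_def)
  finally show ?thesis .
qed

lemma f_minus_conv_lp:
  fixes f :: "'g::group_add \<Rightarrow> 'k::real_normed_vector"
  assumes "f \<in> Dp_space p S" "finite_symmetric_generating_set S" "p > 0"
    and "finitely_supported_prob \<xi>"
  shows "(\<lambda>x. f x - conv \<xi> f x) \<in> lp_space p"
proof -
  define A where "A = {\<gamma>. \<xi> \<gamma> \<noteq> 0}"
  have finA: "finite A" and s1: "(\<Sum>\<gamma>\<in>A. \<xi> \<gamma>) = 1"
    using assms(4) by (auto simp: finitely_supported_prob_def A_def)
  have eq: "f x - conv \<xi> f x = (\<Sum>\<gamma>\<in>A. \<xi> \<gamma> *\<^sub>R (- (f (- \<gamma> + x) - f x)))" for x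
  proof -
    have "f x = (\<Sum>\<gamma>\<in>A. \<xi> \<gamma>) *\<^sub>R f x" using s1 by simp
    also have "\<dots> = (\<Sum>\<gamma>\<in>A. \<xi> \<gamma> *\<^sub>R f x)" by (rule scaleR_sum_left)
    finally have "f x - conv \<xi> f x = (\<Sum>\<gamma>\<in>A. \<xi> \<gamma> *\<^sub>R f x) - (\<Sum>\<gamma>\<in>A. \<xi> \<gamma> *\<^sub>R f (- \<gamma> + x))"
      by (simp add: conv_def A_def)
    then show ?thesis by (simp add: sum_subtractf scaleR_diff_right)
  qed
  show ?thesis unfolding eq
    using assms finA
    by (intro lp_sum lp_scale lp_uminus Dp_translate_lp) auto
qed



definition trunc :: "real \<Rightarrow> 'a::real_normed_vector \<Rightarrow> 'a" where
  "trunc M z = (if norm z \<le> M then z else (M / norm z) *\<^sub>R z)"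

lemma trunc_norm: "M \<ge> 0 \<Longrightarrow> norm (trunc M z) \<le> M"
  by (auto simp: trunc_def)

lemma trunc_out_in:
  fixes z w :: "'a::real_normed_vector"
  assumes "M \<ge> 0" "norm z > M" "norm w \<le> M"
  shows "norm ((M / norm z) *\<^sub>R z - w) \<le> 2 * norm (z - w)"
proof -
  have nz: "norm z > 0" using assms by linarith
  have "(M / norm z) *\<^sub>R z - w = ((M / norm z) *\<^sub>R z - z) + (z - w)" by simp
  hence "norm ((M / norm z) *\<^sub>R z - w) \<le> norm ((M / norm z) *\<^sub>R z - z) + norm (z - w)"
    by (metis norm_triangle_ineq)
  also have "(M / norm z) *\<^sub>R z - z = (M / norm z - 1) *\<^sub>R z" by (simp add: scaleR_diff_left)
  also have "norm \<dots> = (1 - M / norm z) * norm z"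
    using nz assms by (simp add: abs_if field_simps)
  also have "\<dots> = norm z - M" using nz by (simp add: field_simps)
  also have "norm z - M \<le> norm z - norm w" using assms by simp
  also have "norm z - norm w \<le> norm (z - w)" by (rule norm_triangle_ineq2)
  finally show ?thesis by simp
qed

lemma trunc_out_out:
  fixes z w :: "'a::real_normed_vector"
  assumes "M \<ge> 0" "norm z > M" "norm w > M"
  shows "norm ((M / norm z) *\<^sub>R z - (M / norm w) *\<^sub>R w) \<le> 2 * norm (z - w)"
proof -
  define a where "a = norm z"
  define b where "b = norm w"
  have a: "a > 0" "a > M" and b: "b > 0" using assms by (auto simp: a_def b_def)
  have "(M / a) *\<^sub>R z - (M / b) *\<^sub>R w = (M / a) *\<^sub>R (z - w) + (M / a - M / b) *\<^sub>R w"
    by (simp add: algebra_simps)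
  hence "norm ((M / a) *\<^sub>R z - (M / b) *\<^sub>R w) \<le> norm ((M / a) *\<^sub>R (z - w)) + norm ((M / a - M / b) *\<^sub>R w)"
    by (metis norm_triangle_ineq)
  also have "norm ((M / a) *\<^sub>R (z - w)) = (M / a) * norm (z - w)"
    using a assms by simp
  also have "norm ((M / a - M / b) *\<^sub>R w) = (M / a) * \<bar>b - a\<bar>"
  proof -
    have "norm ((M / a - M / b) *\<^sub>R w) = \<bar>M / a - M / b\<bar> * b" by (simp add: b_def)
    moreover have "M / a - M / b = (M / a) * ((b - a) / b)" using a b by (simp add: field_simps)
    moreover have "\<bar>(M / a) * ((b - a) / b)\<bar> * b = (M / a) * \<bar>b - a\<bar>"
      using a b assms by (simp add: abs_mult)
    ultimately show ?thesis by metis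
  qed
  also have "\<bar>b - a\<bar> \<le> norm (z - w)"
    unfolding a_def b_def by (metis abs_minus_commute norm_triangle_ineq3)
  hence "(M / a) * norm (z - w) + (M / a) * \<bar>b - a\<bar> \<le> (M / a) * (2 * norm (z - w))"
    using a assms by (subst distrib_left[symmetric], intro mult_left_mono) auto
  also have "\<dots> \<le> 1 * (2 * norm (z - w))"
    using a assms by (intro mult_right_mono) auto
  finally show ?thesis by (simp add: a_def b_def)
qed

lemma trunc_lip:
  fixes z w :: "'a::real_normed_vector"
  assumes "M \<ge> 0"
  shows "norm (trunc M z - trunc M w) \<le> 2 * norm (z - w)"
proof (cases "norm z \<le> M")
  case True
  show ?thesis
  proof (cases "norm w \<le> M")
    case True
    with \<open>norm z \<le> M\<close> show ?thesis by (simp add: trunc_def)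
  next
    case False
    with True trunc_out_in[OF assms, of w z] show ?thesis
      by (simp add: trunc_def norm_minus_commute)
  qed
next
  case False
  show ?thesis
  proof (cases "norm w \<le> M")
    case True
    with False trunc_out_in[OF assms, of z w] show ?thesis by (simp add: trunc_def)
  next
    case F2: False
    with False trunc_out_out[OF assms, of z w] show ?thesis by (simp add: trunc_def)
  qed
qed

lemma bounded_approx:
  fixes f :: "'g::group_add \<Rightarrow> 'k::real_normed_vector"
  assumes "f \<in> Dp_space p S" "p > 0" "\<eta> > 0"
  shows "\<exists>g M. (\<forall>x. norm (g x) \<le> M) \<and> (\<lambda>x. f x - g x) \<in> Dp_space p S \<and> Dp_norm p S (\<lambda>x. f x - g x) < \<eta>"
proof -
  define E where "E = cayley_edges S"
  define d where "d = (\<lambda>(x, y). norm (f y - f x) powr p)"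
  have smd: "d summable_on E" using assms(1) by (simp add: Dp_space_def d_def E_def)
  have pos: "\<eta> powr p / 3 powr p > 0" using assms by simp
  obtain G where G: "finite G" "G \<subseteq> E" "infsum d (E - G) < \<eta> powr p / 3 powr p"
    using tail_small[OF smd pos] by blast
  define M where "M = norm (f 0) + (\<Sum>e\<in>G. norm (f (fst e)) + norm (f (snd e)))"
  have M0: "norm (f 0) \<le> M" by (simp add: M_def sum_nonneg)
  have MG: "norm (f (fst e)) \<le> M \<and> norm (f (snd e)) \<le> M" if "e \<in> G" for e
  proof -
    have "norm (f (fst e)) + norm (f (snd e)) \<le> (\<Sum>e\<in>G. norm (f (fst e)) + norm (f (snd e)))"
      using that G(1) by (intro member_le_sum) auto
    then show ?thesis unfolding M_def by (smt (verit) norm_ge_zero)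
  qed
  have Mnn: "M \<ge> 0" using M0 norm_ge_zero order_trans by blast
  define g where "g x = trunc M (f x)" for x
  define h where "h x = f x - g x" for x
  have hz: "h z = 0" if "norm (f z) \<le> M" for z using that by (simp add: h_def g_def trunc_def)
  define dh where "dh = (\<lambda>(x, y). norm (h y - h x) powr p)"
  have dh_le: "dh e \<le> 3 powr p * d e" for e
  proof (cases e)
    case (Pair x y)
    have "norm (h y - h x) = norm ((f y - f x) - (g y - g x))" by (simp add: h_def algebra_simps)
    also have "\<dots> \<le> norm (f y - f x) + norm (g y - g x)" by (rule norm_triangle_ineq4)
    also have "norm (g y - g x) \<le> 2 * norm (f y - f x)" unfolding g_def by (rule trunc_lip[OF Mnn])
    finally have "norm (h y - h x) \<le> 3 * norm (f y - f x)" by simp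
    hence "norm (h y - h x) powr p \<le> (3 * norm (f y - f x)) powr p"
      using assms(2) by (intro powr_mono2) auto
    then show ?thesis using Pair by (simp add: dh_def d_def powr_mult)
  qed
  have dh0: "dh e \<ge> 0" for e by (auto simp: dh_def split: prod.splits)
  have dhG: "dh e = 0" if "e \<in> G" for e
    using MG[OF that] hz by (auto simp: dh_def split: prod.splits)
  have sm3: "(\<lambda>e. 3 powr p * d e) summable_on E" using smd by (rule summable_on_cmult_right)
  have smh: "dh summable_on E" using sm3 by (rule summable_on_comparison_test) (use dh_le dh0 in auto)
  have Dh: "h \<in> Dp_space p S" using smh by (simp add: Dp_space_def dh_def E_def)
  have "infsum dh E = infsum dh (E - G)"
    using dhG by (intro infsum_cong_neutral) auto
  also have "\<dots> \<le> infsum (\<lambda>e. 3 powr p * d e) (E - G)"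
    using smh sm3 dh_le by (intro infsum_mono) (auto intro: summable_on_subset_banach)
  also have "\<dots> = 3 powr p * infsum d (E - G)" by (rule infsum_cmult_right')
  also have "\<dots> < 3 powr p * (\<eta> powr p / 3 powr p)"
    by (rule mult_strict_left_mono) (use G(3) in auto)
  also have "\<dots> = \<eta> powr p" by simp
  finally have lt: "infsum dh E < \<eta> powr p" .
  have "Dp_norm p S h = (infsum dh E) powr (1 / p)"
    using hz[OF M0] by (simp add: Dp_norm_def dh_def E_def)
  also have "\<dots> < (\<eta> powr p) powr (1 / p)"
    using lt assms(2) by (intro powr_less_mono2) (auto intro: infsum_nonneg dh0)
  also have "\<dots> = \<eta>" using assms by (simp add: powr_powr)
  finally have "Dp_norm p S h < \<eta>" .
  moreover have "\<forall>x. norm (g x) \<le> M" by (auto simp: g_def intro: trunc_norm[OF Mnn])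
  ultimately show ?thesis using Dh unfolding h_def by blast
qed

lemma lp_point:
  fixes u :: "'g \<Rightarrow> 'k::real_normed_vector"
  assumes "u \<in> lp_space p" "p > 0"
  shows "norm (u x) \<le> lp_norm p u"
proof -
  have "norm (u x) powr p \<le> (\<Sum>\<^sub>\<infinity>y. norm (u y) powr p)"
    using assms finite_sum_le_infsum[of "\<lambda>y. norm (u y) powr p" UNIV "{x}"]
    by (auto simp: lp_space_def)
  hence "(norm (u x) powr p) powr (1 / p) \<le> (\<Sum>\<^sub>\<infinity>y. norm (u y) powr p) powr (1 / p)"
    using assms by (intro powr_mono2) auto
  then show ?thesis using assms by (simp add: lp_norm_def powr_powr)
qed

lemma lp_norm_powr:
  fixes u :: "'g \<Rightarrow> 'k::real_normed_vector"
  assumes "p > 0"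
  shows "lp_norm p u powr p = (\<Sum>\<^sub>\<infinity>y. norm (u y) powr p)"
proof -
  have "(\<Sum>\<^sub>\<infinity>y. norm (u y) powr p) \<ge> 0" by (intro infsum_nonneg) auto
  then show ?thesis using assms by (simp add: lp_norm_def powr_powr)
qed

lemma supp_grad_finite:
  fixes \<xi> :: "'g::group_add \<Rightarrow> real"
  assumes "finite {\<gamma>. \<xi> \<gamma> \<noteq> 0}"
  shows "finite {\<gamma>. \<xi> (- s + \<gamma>) - \<xi> \<gamma> \<noteq> 0}"
proof (rule finite_subset)
  show "{\<gamma>. \<xi> (- s + \<gamma>) - \<xi> \<gamma> \<noteq> 0} \<subseteq> {\<gamma>. \<xi> \<gamma> \<noteq> 0} \<union> (\<lambda>a. s + a) ` {\<gamma>. \<xi> \<gamma> \<noteq> 0}"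
  proof
    fix \<gamma> assume "\<gamma> \<in> {\<gamma>. \<xi> (- s + \<gamma>) - \<xi> \<gamma> \<noteq> 0}"
    hence "\<xi> (- s + \<gamma>) \<noteq> 0 \<or> \<xi> \<gamma> \<noteq> 0" by auto
    moreover have "\<gamma> = s + (- s + \<gamma>)" by (simp add: add.assoc[symmetric])
    ultimately show "\<gamma> \<in> {\<gamma>. \<xi> \<gamma> \<noteq> 0} \<union> (\<lambda>a. s + a) ` {\<gamma>. \<xi> \<gamma> \<noteq> 0}" by blast
  qed
qed (use assms in auto)

lemma pointwise_conv:
  fixes f :: "'g::group_add \<Rightarrow> 'k::real_normed_vector"
  assumes f: "f \<in> Dp_space p S" and p: "p > 0" and K: "K > 0"
    and fin: "\<And>n. finite {\<gamma>. \<xi> n \<gamma> \<noteq> 0}"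
    and c0: "(\<lambda>n. \<Sum>\<^sub>\<infinity>x. \<bar>\<xi> n (- s + x) - \<xi> n x\<bar>) \<longlonglongrightarrow> 0"
    and hyp: "\<And>n (F :: 'g \<Rightarrow> 'k). F \<in> Dp_space p S \<Longrightarrow> conv (\<lambda>\<gamma>. \<xi> n (- s + \<gamma>) - \<xi> n \<gamma>) F \<in> lp_space p \<and>
               lp_norm p (conv (\<lambda>\<gamma>. \<xi> n (- s + \<gamma>) - \<xi> n \<gamma>) F) \<le> K * Dp_norm p S F"
  shows "(\<lambda>n. conv (\<lambda>\<gamma>. \<xi> n (- s + \<gamma>) - \<xi> n \<gamma>) f x) \<longlonglongrightarrow> 0"
proof (rule LIMSEQ_I)
  fix r :: real assume r: "r > 0"
  define c where "c n = (\<lambda>\<gamma>. \<xi> n (- s + \<gamma>) - \<xi> n \<gamma>)" for n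
  obtain g M where gM: "\<forall>x. norm (g x) \<le> M" "(\<lambda>x. f x - g x) \<in> Dp_space p S"
      "Dp_norm p S (\<lambda>x. f x - g x) < r / (2 * K)"
    using bounded_approx[OF f p, of "r / (2 * K)"] r K by auto
  have M0: "M \<ge> 0" using gM(1) norm_ge_zero order_trans by blast
  have part1: "norm (conv (c n) (\<lambda>x. f x - g x) x) < r / 2" for n
  proof -
    have h: "conv (c n) (\<lambda>x. f x - g x) \<in> lp_space p \<and> lp_norm p (conv (c n) (\<lambda>x. f x - g x)) \<le> K * Dp_norm p S (\<lambda>x. f x - g x)"
      using hyp[of "\<lambda>x. f x - g x" n] gM(2) by (simp add: c_def)
    have "norm (conv (c n) (\<lambda>x. f x - g x) x) \<le> lp_norm p (conv (c n) (\<lambda>x. f x - g x))"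
      using h p by (intro lp_point) auto
    also have "\<dots> \<le> K * Dp_norm p S (\<lambda>x. f x - g x)" using h by simp
    also have "\<dots> < K * (r / (2 * K))" by (rule mult_strict_left_mono) (use gM(3) K in auto)
    also have "\<dots> = r / 2" using K by simp
    finally show ?thesis .
  qed
  define t where "t n = (\<Sum>\<^sub>\<infinity>x. \<bar>\<xi> n (- s + x) - \<xi> n x\<bar>)" for n
  have part2: "norm (conv (c n) g x) \<le> M * t n" for n
  proof -
    define C where "C = {\<gamma>. c n \<gamma> \<noteq> 0}"
    have finC: "finite C" unfolding C_def c_def by (rule supp_grad_finite[OF fin])
    have "norm (conv (c n) g x) \<le> (\<Sum>\<gamma>\<in>C. norm (c n \<gamma> *\<^sub>R g (- \<gamma> + x)))"
      unfolding conv_def C_def by (rule norm_sum)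
    also have "\<dots> \<le> (\<Sum>\<gamma>\<in>C. M * \<bar>c n \<gamma>\<bar>)"
    proof (rule sum_mono)
      fix \<gamma> assume "\<gamma> \<in> C"
      have "\<bar>c n \<gamma>\<bar> * norm (g (- \<gamma> + x)) \<le> \<bar>c n \<gamma>\<bar> * M"
        using gM(1) by (intro mult_left_mono) auto
      then show "norm (c n \<gamma> *\<^sub>R g (- \<gamma> + x)) \<le> M * \<bar>c n \<gamma>\<bar>" by (simp add: mult.commute)
    qed
    also have "\<dots> = M * (\<Sum>\<gamma>\<in>C. \<bar>c n \<gamma>\<bar>)" by (simp add: sum_distrib_left)
    also have "(\<Sum>\<gamma>\<in>C. \<bar>c n \<gamma>\<bar>) = t n"
    proof -
      have "t n = (\<Sum>\<^sub>\<infinity>x\<in>C. \<bar>c n x\<bar>)"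
        unfolding t_def by (intro infsum_cong_neutral) (auto simp: C_def c_def)
      then show ?thesis using finC by simp
    qed
    finally show ?thesis .
  qed
  have "(\<lambda>n. M * t n) \<longlonglongrightarrow> M * 0" using c0 unfolding t_def by (intro tendsto_mult tendsto_const)
  hence "\<forall>\<^sub>F n in sequentially. M * t n < r / 2" using r by (intro order_tendstoD(2)) auto
  then obtain no where no: "\<And>n. n \<ge> no \<Longrightarrow> M * t n < r / 2" unfolding eventually_sequentially by blast
  show "\<exists>no. \<forall>n\<ge>no. norm (conv (\<lambda>\<gamma>. \<xi> n (- s + \<gamma>) - \<xi> n \<gamma>) f x - 0) < r"
  proof (intro exI allI impI)
    fix n assume "n \<ge> no"
    have "conv (c n) f x = conv (c n) g x + conv (c n) (\<lambda>x. f x - g x) x"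
      by (simp add: conv_diff)
    hence "norm (conv (c n) f x) \<le> norm (conv (c n) g x) + norm (conv (c n) (\<lambda>x. f x - g x) x)"
      by (metis norm_triangle_ineq)
    also have "\<dots> < r" using part1[of n] part2[of n] no[OF \<open>n \<ge> no\<close>] by linarith
    finally show "norm (conv (\<lambda>\<gamma>. \<xi> n (- s + \<gamma>) - \<xi> n \<gamma>) f x - 0) < r" by (simp add: c_def)
  qed
qed

lemma edge_inv: "x + - (- s + x) = (s::'g::group_add)"
  by (simp add: minus_add add.assoc[symmetric])

lemma edge_inv': "x - (- s + x) = (s::'g::group_add)"
  by (metis edge_inv diff_conv_add_uminus)

lemma edge_sum:
  fixes \<Phi> :: "'g::group_add \<Rightarrow> 'g \<Rightarrow> real"
  assumes "finite S" "\<And>s. s \<in> S \<Longrightarrow> \<Phi> s summable_on UNIV"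
  shows "(\<lambda>(x, y). \<Phi> (x + - y) x) summable_on cayley_edges S"
    and "infsum (\<lambda>(x, y). \<Phi> (x + - y) x) (cayley_edges S) = (\<Sum>s\<in>S. infsum (\<Phi> s) UNIV)"
proof -
  define F where "F = (\<lambda>(x, y). \<Phi> (x + - y) x)"
  define R where "R s = range (\<lambda>x. (x, - s + x))" for s :: 'g
  have E: "cayley_edges S = (\<Union>s\<in>S. R s)" by (auto simp: cayley_edges_def R_def)
  have disj: "R s \<inter> R s' = {}" if "s \<noteq> s'" for s s'
    using that by (auto simp: R_def)
  have inj: "inj (\<lambda>x. (x, - s + x))" for s :: 'g by (auto simp: inj_on_def)
  have comp: "F \<circ> (\<lambda>x. (x, - s + x)) = \<Phi> s" for s by (auto simp: F_def edge_inv edge_inv')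
  have sR: "F summable_on R s" if "s \<in> S" for s
    unfolding R_def using summable_on_reindex[OF inj[of s], of F] comp assms(2)[OF that] by simp
  have iR: "infsum F (R s) = infsum (\<Phi> s) UNIV" for s
    unfolding R_def using infsum_reindex[OF inj[of s], of F] comp by simp
  show "(\<lambda>(x, y). \<Phi> (x + - y) x) summable_on cayley_edges S"
    unfolding E F_def[symmetric] using assms(1) sR disj by (intro summable_on_finite_union_disjoint) auto
  have "infsum F (\<Union>s\<in>S. R s) = (\<Sum>s\<in>S. infsum F (R s))"
    using assms(1) sR disj by (intro sum_infsum[symmetric]) auto
  then show "infsum (\<lambda>(x, y). \<Phi> (x + - y) x) (cayley_edges S) = (\<Sum>s\<in>S. infsum (\<Phi> s) UNIV)"
    unfolding E F_def[symmetric] using iR by simp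
qed



theorem lemma3p3:
  fixes S :: "'g::group_add set" and p :: real and K :: real
    and \<xi> :: "nat \<Rightarrow> 'g \<Rightarrow> real"
  assumes "amenable_group TYPE('g)"
    and "finite_symmetric_generating_set S"
    and "1 < p"
    and "\<And>n. finitely_supported_prob (\<xi> n)"
    and "\<And>\<gamma>. (\<lambda>n. \<Sum>\<^sub>\<infinity>x. \<bar>\<xi> n (- \<gamma> + x) - \<xi> n x\<bar>) \<longlonglongrightarrow> 0"
    and "K > 0"
    and "\<And>s n (f :: 'g \<Rightarrow> 'k::{real_normed_field, banach}). s \<in> S \<Longrightarrow> f \<in> Dp_space p S \<Longrightarrow>
           conv (conv (\<lambda>x. dirac s x - dirac 0 x) (\<xi> n)) f \<in> lp_space p \<and>
           lp_norm p (conv (conv (\<lambda>x. dirac s x - dirac 0 x) (\<xi> n)) f) \<le> K * Dp_norm p S f"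
  shows "reduced_lp_cohomology_vanishes p S TYPE('k)"
proof -
  note gen = assms(2) and p1 = assms(3) and prob = assms(4) and linv = assms(5)
    and Kpos = assms(6) and hyp = assms(7)
  have p: "p > 0" using p1 by simp
  have finS: "finite S" using gen by (simp add: finite_symmetric_generating_set_def)
  have fin: "finite {\<gamma>. \<xi> n \<gamma> \<noteq> 0}" for n
    using prob[of n] by (simp add: finitely_supported_prob_def)
  define cn where "cn n s = (\<lambda>\<gamma>. \<xi> n (- s + \<gamma>) - \<xi> n \<gamma>)" for n s
  have hyp': "conv (cn n s) F \<in> lp_space p \<and> lp_norm p (conv (cn n s) F) \<le> K * Dp_norm p S F"
    if "s \<in> S" "F \<in> Dp_space p S" for s n and F :: "'g \<Rightarrow> 'k"
    using hyp[OF that] by (simp add: conv_dirac_diff cn_def)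
  have "Dp_space p S \<subseteq> (lp_plus_const_closure p S :: ('g \<Rightarrow> 'k) set)"
  proof
    fix f :: "'g \<Rightarrow> 'k" assume f: "f \<in> Dp_space p S"
    have "\<forall>\<epsilon>>0. \<exists>g\<in>lp_space p. \<exists>c. Dp_norm p S (\<lambda>x. f x - (g x + c)) < \<epsilon>"
    proof (intro allI impI)
      fix \<epsilon> :: real assume eps: "\<epsilon> > 0"
      define E where "E = cayley_edges S"
      define V where "V n e = conv (cn n (fst e + - snd e)) f (fst e)" for n e
      define B where "B = real (card S) * (K * Dp_norm p S f) powr p"
      define \<Phi> where "\<Phi> n s x = norm (conv (cn n s) f x) powr p" for n s x
      have \<Phi>sm: "\<Phi> n s summable_on UNIV" if "s \<in> S" for n s
        using hyp'[OF that f, of n] by (simp add: \<Phi>_def[abs_def] lp_space_def)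
      have \<Phi>le: "infsum (\<Phi> n s) UNIV \<le> (K * Dp_norm p S f) powr p" if "s \<in> S" for n s
      proof -
        have "infsum (\<Phi> n s) UNIV = lp_norm p (conv (cn n s) f) powr p"
          using p by (simp add: lp_norm_powr \<Phi>_def[abs_def])
        also have "\<dots> \<le> (K * Dp_norm p S f) powr p"
          using hyp'[OF that f, of n] p by (intro powr_mono2) (auto simp: lp_norm_def)
        finally show ?thesis .
      qed
      have Veq: "(\<lambda>e. norm (V n e) powr p) = (\<lambda>(x, y). \<Phi> n (x + - y) x)" for n
        by (auto simp: V_def \<Phi>_def)
      have Vsm: "(\<lambda>e. norm (V n e) powr p) summable_on E" for n
        unfolding Veq E_def using finS \<Phi>sm by (intro edge_sum(1)) auto
      have VB: "(\<Sum>\<^sub>\<infinity>e\<in>E. norm (V n e) powr p) \<le> B" for n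
      proof -
        have "(\<Sum>\<^sub>\<infinity>e\<in>E. norm (V n e) powr p) = (\<Sum>s\<in>S. infsum (\<Phi> n s) UNIV)"
          unfolding Veq E_def using finS \<Phi>sm by (intro edge_sum(2)) auto
        also have "\<dots> \<le> (\<Sum>s\<in>S. (K * Dp_norm p S f) powr p)" using \<Phi>le by (intro sum_mono)
        also have "\<dots> = B" by (simp add: B_def)
        finally show ?thesis .
      qed
      have Vpw: "(\<lambda>n. V n e) \<longlonglongrightarrow> 0" if eE: "e \<in> E" for e
      proof -
        obtain x s where e: "e = (x, - s + x)" "s \<in> S"
          using eE by (cases e) (auto simp: E_def cayley_edges_def)
        have "V n e = conv (\<lambda>\<gamma>. \<xi> n (- s + \<gamma>) - \<xi> n \<gamma>) f x" for n
          by (simp add: V_def e edge_inv cn_def)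
        moreover have "(\<lambda>n. conv (\<lambda>\<gamma>. \<xi> n (- s + \<gamma>) - \<xi> n \<gamma>) f x) \<longlonglongrightarrow> 0"
          by (rule pointwise_conv[OF f p Kpos fin linv]) (use hyp'[OF e(2)] in \<open>auto simp: cn_def\<close>)
        ultimately show ?thesis by simp
      qed
      obtain N m where Npos: "N > 0"
        and hump: "(\<Sum>\<^sub>\<infinity>e\<in>E. norm ((1 / real N) *\<^sub>R (\<Sum>k<N. V (m k) e)) powr p) < \<epsilon> powr p"
        using gliding_hump[OF p1 Vsm VB Vpw, of "\<epsilon> powr p"] eps by auto
      define u where "u x = (1 / real N) *\<^sub>R (\<Sum>k<N. conv (\<xi> (m k)) f x)" for x
      define g where "g x = f x - u x" for x
      have geq: "g = (\<lambda>x. (1 / real N) *\<^sub>R (\<Sum>k<N. f x - conv (\<xi> (m k)) f x))"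
      proof
        fix x
        have "(1 / real N) *\<^sub>R (\<Sum>k<N. f x) = (1 / real N) *\<^sub>R (real N *\<^sub>R f x)"
          by (simp only: sum_constant_scaleR card_lessThan)
        also have "\<dots> = f x" using Npos by (simp only: scaleR_scaleR) simp
        finally have "(1 / real N) *\<^sub>R (\<Sum>k<N. f x) = f x" .
        then show "g x = (1 / real N) *\<^sub>R (\<Sum>k<N. f x - conv (\<xi> (m k)) f x)"
          by (simp add: g_def u_def sum_subtractf scaleR_diff_right)
      qed
      have glp: "g \<in> lp_space p"
        unfolding geq using p f gen prob
        by (intro lp_scale lp_sum f_minus_conv_lp) auto
      have ueq: "u y - u x = (1 / real N) *\<^sub>R (\<Sum>k<N. V (m k) (x, y))" if xyE: "(x, y) \<in> E" for x y
      proof -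
        obtain s where s: "y = - s + x" "s \<in> S" using xyE by (auto simp: E_def cayley_edges_def)
        have "conv (\<xi> (m k)) f y - conv (\<xi> (m k)) f x = V (m k) (x, y)" for k
          using conv_grad[OF fin, of "m k" s f x] by (simp add: V_def s edge_inv cn_def)
        then show ?thesis by (simp add: u_def scaleR_diff_right[symmetric] sum_subtractf[symmetric])
      qed
      have "Dp_norm p S (\<lambda>x. f x - (g x + u 0)) =
          (\<Sum>\<^sub>\<infinity>e\<in>E. norm ((1 / real N) *\<^sub>R (\<Sum>k<N. V (m k) e)) powr p) powr (1 / p)"
      proof -
        have "(\<Sum>\<^sub>\<infinity>(x, y)\<in>E. norm ((f y - (g y + u 0)) - (f x - (g x + u 0))) powr p)
            = (\<Sum>\<^sub>\<infinity>e\<in>E. norm ((1 / real N) *\<^sub>R (\<Sum>k<N. V (m k) e)) powr p)"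
        proof (rule infsum_cong)
          fix e assume "e \<in> E"
          then obtain x y where e: "e = (x, y)" "(x, y) \<in> E" by (cases e) auto
          have "(f y - (g y + u 0)) - (f x - (g x + u 0)) = u y - u x" by (simp add: g_def)
          then show "(case e of (x, y) \<Rightarrow> norm ((f y - (g y + u 0)) - (f x - (g x + u 0))) powr p)
              = norm ((1 / real N) *\<^sub>R (\<Sum>k<N. V (m k) e)) powr p"
            using ueq[OF e(2)] e(1) by simp
        qed
        then show ?thesis by (simp add: Dp_norm_def E_def g_def)
      qed
      also have "\<dots> < (\<epsilon> powr p) powr (1 / p)"
        using hump p by (intro powr_less_mono2) (auto intro: infsum_nonneg)
      also have "\<dots> = \<epsilon>" using p eps by (simp add: powr_powr)
      finally show "\<exists>g\<in>lp_space p. \<exists>c. Dp_norm p S (\<lambda>x. f x - (g x + c)) < \<epsilon>"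
        using glp by blast
    qed
    with f show "f \<in> lp_plus_const_closure p S" by (simp add: lp_plus_const_closure_def)
  qed
  moreover have "(lp_plus_const_closure p S :: ('g \<Rightarrow> 'k) set) \<subseteq> Dp_space p S"
    by (auto simp: lp_plus_const_closure_def)
  ultimately show ?thesis unfolding reduced_lp_cohomology_vanishes_def by blast
qed

end
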